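(* Let $\mathbf{x}=(\mathbf{x}_1,\dots,\mathbf{x}_n)$ be a Generalized Nash equilibrium of the game $G^{(2)}$ and suppose $i\in\mathcal{T}_I(\mathbf{x})$ for some $i\in[n]$. Then $J_{\mathbf{x}_{-i}}=A(\mathbf{x}_{-i})$.
   Context: $G^{(2)}$ is a Fragile multi-CPR Game: $n,m\ge1$, $[k]=\{1,\dots,k\}$, $C_m=\{(x_1,\dots,x_m)\in[0,1]^m:\sum_j x_j\le1\}$, $\mathcal{C}_n=\prod_{i\in[n]}C_m$, $\mathcal{C}_{-i}=\prod_{[n]\setminus\{i\}}C_m$. A profile is $\mathbf{x}=(\mathbf{x}_1,\dots,\mathbf{x}_n)$, $\mathbf{x}_i=(x_{i1},\dots,x_{im})$; write $\mathbf{x}=(\mathbf{x}_i,\mathbf{x}_{-i})$; $\mathbf{x}_T^{(j)}=\sum_i x_{ij}$, $\mathbf{x}_T^{j|i}=\sum_{\ell\ne i}x_{\ell j}$. Each CPR $j$ has return rate $\mathcal{R}_j(t)>1$ and failure probability $p_j(t)\in[0,1]$; each player $i$ has parameters $a_i,k_i$. $\mathcal{F}_{ij}(t)=(\mathcal{R}_j(t)-1)^{a_i}(1-p_j(t))-k_ip_j(t)$; utility $\mathcal{V}_i(\mathbf{x}_i;\mathbf{x}_{-i})=\sum_j x_{ij}^{a_i}\mathcal{F}_{ij}(\mathbf{x}_T^{(j)})$. Assumption: (1) $p_j(0)=0$, $p_j(t)=1$ for $t\ge1$; (2) $a_i\in(0,1]$, $k_i>0$; (3) each $\mathcal{F}_{ij}$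 (continuous on $[0,1]$) has strictly negative first and second derivatives on $(0,1)$. $\omega_{ij}\in(0,1)$ is the unique zero of $\mathcal{F}_{ij}$ in $(0,1)$. $A(\mathbf{x}_{-i})=\{j:\mathbf{x}_T^{j|i}<\omega_{ij}\}$. $\vartheta_i(\mathbf{x}_{-i})=C_m\cap\big(\prod_{j\in A(\mathbf{x}_{-i})}[0,\omega_{ij}-\mathbf{x}_T^{j|i}]\times\prod_{j\notin A(\mathbf{x}_{-i})}\{0\}\big)$. A Generalized Nash equilibrium is $\mathbf{x}\in\mathcal{C}_n$ with, for all $i$, $\mathbf{x}_i\in\vartheta_i(\mathbf{x}_{-i})$ and $\mathcal{V}_i(\mathbf{x}_i;\mathbf{x}_{-i})\ge\mathcal{V}_i(\mathbf{y};\mathbf{x}_{-i})$ for all $\mathbf{y}\in\vartheta_i(\mathbf{x}_{-i})$. $\psi_{ij}(x;s)=x\,\mathcal{F}_{ij}'(x+s)+a_i\mathcal{F}_{ij}(x+s)$. For a GNE $\mathbf{x}$: $J_{\mathbf{x}_{-i}}=\{j\in A(\mathbf{x}_{-i}):x_{ij}\ne0\}$; $\mathbf{x}_i$ is of Type I if $\sum_{j\in J_{\mathbf{x}_{-i}}}x_{ij}<1$ and $\psi_{ij}(x_{ij};\mathbf{x}_T^{j|i})=0$ for all $j\in J_{\mathbf{x}_{-i}}$; of Type II if $\sum_{j\in J_{\mathbf{x}_{-i}}}x_{ij}=1$ and there is $\kappa_0\ge0$ with $x_{ij}^{a_i-1}\psi_{ij}(x_{ij};\mathbf{x}_T^{j|i})=\kappa_0$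 for all $j\in J_{\mathbf{x}_{-i}}$. $\mathcal{T}_I(\mathbf{x})=\{i\in[n]:\mathbf{x}_i\text{ is of Type I}\}$. *)

theory Defs
  imports "HOL-Analysis.Analysis"
begin

text \<open>Players are indexed by {1..n}, CPRs by {1..m}. A profile is x :: nat => nat => real,
  x i j being the investment of player i in CPR j. R j, p j are the return rate and failure
  probability of CPR j; a i, k i the parameters of player i.\<close>

definition FF :: "(nat \<Rightarrow> real \<Rightarrow> real) \<Rightarrow> (nat \<Rightarrow> real \<Rightarrow> real) \<Rightarrow> (nat \<Rightarrow> real) \<Rightarrow> (nat \<Rightarrow> real)
    \<Rightarrow> nat \<Rightarrow> nat \<Rightarrow> real \<Rightarrow> real" where
  "FF R p a k i j t = (R j t - 1) powr (a i) * (1 - p j t) - k i * p j t"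

definition omega :: "(nat \<Rightarrow> real \<Rightarrow> real) \<Rightarrow> (nat \<Rightarrow> real \<Rightarrow> real) \<Rightarrow> (nat \<Rightarrow> real) \<Rightarrow> (nat \<Rightarrow> real)
    \<Rightarrow> nat \<Rightarrow> nat \<Rightarrow> real" where
  "omega R p a k i j = (THE w. 0 < w \<and> w < 1 \<and> FF R p a k i j w = 0)"

definition fragile_game :: "nat \<Rightarrow> nat \<Rightarrow> (nat \<Rightarrow> real \<Rightarrow> real) \<Rightarrow> (nat \<Rightarrow> real \<Rightarrow> real)
    \<Rightarrow> (nat \<Rightarrow> real) \<Rightarrow> (nat \<Rightarrow> real) \<Rightarrow> bool" where
  "fragile_game n m R p a k \<longleftrightarrow>
     1 \<le> n \<and> 1 \<le> m \<and>
     (\<forall>j\<in>{1..m}. \<forall>t. R j t > 1 \<and> 0 \<le> p j t \<and> p j t \<le> 1) \<and>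
     (\<forall>j\<in>{1..m}. p j 0 = 0 \<and> (\<forall>t\<ge>1. p j t = 1)) \<and>
     (\<forall>i\<in>{1..n}. 0 < a i \<and> a i \<le> 1 \<and> 0 < k i) \<and>
     (\<forall>i\<in>{1..n}. \<forall>j\<in>{1..m}.
        continuous_on {0..1} (FF R p a k i j) \<and>
        (\<forall>t\<in>{0<..<1}.
           (FF R p a k i j has_real_derivative deriv (FF R p a k i j) t) (at t) \<and>
           (deriv (FF R p a k i j) has_real_derivative deriv (deriv (FF R p a k i j)) t) (at t) \<and>
           deriv (FF R p a k i j) t < 0 \<and> deriv (deriv (FF R p a k i j)) t < 0))"

definition in_Cm :: "nat \<Rightarrow> (nat \<Rightarrow> real) \<Rightarrow> bool" where
  "in_Cm m y \<longleftrightarrow> (\<forall>j\<in>{1..m}. 0 \<le> y j \<and> y j \<le> 1) \<and> (\<Sum>j=1..m. y j) \<le> 1"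

definition in_Cn :: "nat \<Rightarrow> nat \<Rightarrow> (nat \<Rightarrow> nat \<Rightarrow> real) \<Rightarrow> bool" where
  "in_Cn n m x \<longleftrightarrow> (\<forall>i\<in>{1..n}. in_Cm m (x i))"

definition others :: "nat \<Rightarrow> (nat \<Rightarrow> nat \<Rightarrow> real) \<Rightarrow> nat \<Rightarrow> nat \<Rightarrow> real" where
  "others n x i j = (\<Sum>l\<in>{1..n} - {i}. x l j)"

definition Aset where
  "Aset n m R p a k x i = {j\<in>{1..m}. others n x i j < omega R p a k i j}"

definition theta where
  "theta n m R p a k x i = {y. in_Cm m y \<and>
     (\<forall>j\<in>{1..m}. if j \<in> Aset n m R p a k x i
                   then 0 \<le> y j \<and> y j \<le> omega R p a k i j - others n x i j
                   else y j = 0)}"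

definition utility where
  "utility n m R p a k x i y = (\<Sum>j=1..m. y j powr a i * FF R p a k i j (y j + others n x i j))"

definition is_GNE where
  "is_GNE n m R p a k x \<longleftrightarrow> in_Cn n m x \<and>
     (\<forall>i\<in>{1..n}. x i \<in> theta n m R p a k x i \<and>
        (\<forall>y\<in>theta n m R p a k x i. utility n m R p a k x i (x i) \<ge> utility n m R p a k x i y))"

definition psi where
  "psi R p a k i j x s = x * deriv (FF R p a k i j) (x + s) + a i * FF R p a k i j (x + s)"

definition Jset where
  "Jset n m R p a k x i = {j\<in>Aset n m R p a k x i. x i j \<noteq> 0}"

definition typeI where
  "typeI n m R p a k x i \<longleftrightarrow>
     (\<Sum>j\<in>Jset n m R p a k x i. x i j) < 1 \<and>
     (\<forall>j\<in>Jset n m R p a k x i. psi R p a k i j (x i j) (others n x i j) = 0)"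

definition T_I where
  "T_I n m R p a k x = {i\<in>{1..n}. typeI n m R p a k x i}"

end

theory Submission
  imports Defs
begin

lemma fg:
  assumes g: "fragile_game n m R p a k" and i: "i \<in> {1..n}" and j: "j \<in> {1..m}"
  shows "R j 0 > 1" "p j 0 = 0" "p j 1 = 1" "k i > 0" "continuous_on {0..1} (FF R p a k i j)"
    "\<forall>t\<in>{0<..<1}. (FF R p a k i j has_real_derivative deriv (FF R p a k i j) t) (at t) \<and>
           deriv (FF R p a k i j) t < 0"
proof -
  have all: "1 \<le> n \<and> 1 \<le> m \<and> (\<forall>j\<in>{1..m}. \<forall>t. R j t > 1 \<and> 0 \<le> p j t \<and> p j t \<le> 1) \<and> (\<forall>j\<in>{1..m}. p j 0 = 0 \<and> (\<forall>t\<ge>1. p j t = 1)) \<and> (\<forall>i\<in>{1..n}. 0 < a i \<and> a i \<le> 1 \<and> 0 < k i) \<and> (\<forall>i\<in>{1..n}. \<forall>j\<in>{1..m}.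
        continuous_on {0..1} (FF R p a k i j) \<and>
        (\<forall>t\<in>{0<..<1}.
           (FF R p a k i j has_real_derivative deriv (FF R p a k i j) t) (at t) \<and>
           (deriv (FF R p a k i j) has_real_derivative deriv (deriv (FF R p a k i j)) t) (at t) \<and>
           deriv (FF R p a k i j) t < 0 \<and> deriv (deriv (FF R p a k i j)) t < 0))" using g unfolding fragile_game_def .
  note A = all[THEN conjunct2, THEN conjunct2, THEN conjunct1]
  note B = all[THEN conjunct2, THEN conjunct2, THEN conjunct2, THEN conjunct1]
  note C = all[THEN conjunct2, THEN conjunct2, THEN conjunct2, THEN conjunct2, THEN conjunct1]
  note D = all[THEN conjunct2, THEN conjunct2, THEN conjunct2, THEN conjunct2, THEN conjunct2]
  show "R j 0 > 1" using A j by blast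
  show "p j 0 = 0" using B j by blast
  show "p j 1 = 1" using B j by (meson order_refl)
  show "k i > 0" using C i by blast
  show "continuous_on {0..1} (FF R p a k i j)" using D i j by blast
  show "\<forall>t\<in>{0<..<1}. (FF R p a k i j has_real_derivative deriv (FF R p a k i j) t) (at t) \<and>
           deriv (FF R p a k i j) t < 0" using D i j by blast
qed

lemma FF_strict_decr:
  assumes g: "fragile_game n m R p a k" and i: "i \<in> {1..n}" and j: "j \<in> {1..m}"
    and uv: "0 \<le> u" "u < v" "v \<le> 1"
  shows "FF R p a k i j v < FF R p a k i j u"
proof -
  have c: "continuous_on {0..1} (FF R p a k i j)"
   and d: "\<forall>t\<in>{0<..<1}. (FF R p a k i j has_real_derivative deriv (FF R p a k i j) t) (at t) \<and>
           deriv (FF R p a k i j) t < 0"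
    using fg[OF g i j] by blast+
  show ?thesis
  proof (rule DERIV_neg_imp_decreasing_open[OF uv(2)])
    fix t assume "u < t" "t < v"
    then have "t \<in> {0<..<1}" using uv by simp
    then show "\<exists>y. (FF R p a k i j has_real_derivative y) (at t) \<and> y < 0"
      using d by blast
  next
    show "continuous_on {u..v} (FF R p a k i j)"
      by (rule continuous_on_subset[OF c]) (use uv in auto)
  qed
qed

lemma omega_props:
  assumes g: "fragile_game n m R p a k" and i: "i \<in> {1..n}" and j: "j \<in> {1..m}"
  shows "0 < omega R p a k i j \<and> omega R p a k i j < 1 \<and> FF R p a k i j (omega R p a k i j) = 0"
proof -
  let ?F = "FF R p a k i j"
  have R0: "R j 0 > 1" and p0: "p j 0 = 0" and p1: "p j 1 = 1" and ki: "k i > 0"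
    using fg[OF g i j] by blast+
  have F0: "?F 0 > 0" using R0 p0 by (simp add: FF_def)
  have F1: "?F 1 < 0" using p1 ki by (simp add: FF_def)
  have c: "continuous_on {0..1} ?F" using fg[OF g i j] by blast
  obtain w where w: "0 \<le> w" "w \<le> 1" "?F w = 0"
    using IVT2'[of ?F 1 0 0] F0 F1 c by auto
  have "w \<noteq> 0" using F0 w(3) by (metis less_irrefl)
  moreover have "w \<noteq> 1" using F1 w(3) by (metis less_irrefl)
  ultimately have w01: "0 < w" "w < 1" using w(1,2) by linarith+
  have uniq: "w' = w" if "0 < w' \<and> w' < 1 \<and> ?F w' = 0" for w'
  proof (rule ccontr)
    assume "w' \<noteq> w"
    then consider "w' < w" | "w < w'" by linarith
    then show False
    proof cases
      case 1
      have "?F w < ?F w'" by (rule FF_strict_decr[OF g i j]) (use that w w01 1 in linarith)+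
      then show ?thesis using that w(3) by linarith
    next
      case 2
      have "?F w' < ?F w" by (rule FF_strict_decr[OF g i j]) (use that w w01 2 in linarith)+
      then show ?thesis using that w(3) by linarith
    qed
  qed
  have "omega R p a k i j = w"
    unfolding omega_def
  proof (rule the_equality)
    show "0 < w \<and> w < 1 \<and> ?F w = 0" using w w01 by blast
  next
    fix w' assume "0 < w' \<and> w' < 1 \<and> ?F w' = 0"
    then show "w' = w" by (rule uniq)
  qed
  then show ?thesis using w w01 by blast
qed

lemma half_aux: "(e::real) \<le> (w - s) / 2 \<Longrightarrow> s < w \<Longrightarrow> e + s < w \<and> e \<le> w - s"
  by (simp add: field_simps)

theorem lemma5:
  fixes n m :: nat and R p :: "nat \<Rightarrow> real \<Rightarrow> real" and a k :: "nat \<Rightarrow> real"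
    and x :: "nat \<Rightarrow> nat \<Rightarrow> real" and i :: nat
  assumes "fragile_game n m R p a k"
    and "is_GNE n m R p a k x"
    and "i \<in> {1..n}"
    and "i \<in> T_I n m R p a k x"
  shows "Jset n m R p a k x i = Aset n m R p a k x i"
proof (rule ccontr)
  note g = assms(1) and gne = assms(2) and i = assms(3)
  assume "Jset n m R p a k x i \<noteq> Aset n m R p a k x i"
  moreover have "Jset n m R p a k x i \<subseteq> Aset n m R p a k x i" unfolding Jset_def by auto
  ultimately obtain j where jA: "j \<in> Aset n m R p a k x i" and jJ: "j \<notin> Jset n m R p a k x i"
    by blast
  have j: "j \<in> {1..m}" using jA unfolding Aset_def by auto
  have x0: "x i j = 0" using jA jJ unfolding Jset_def by auto
  let ?s = "others n x i j"
  let ?w = "omega R p a k i j"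
  let ?F = "FF R p a k i j"
  have sw: "?s < ?w" using jA unfolding Aset_def by auto
  have Cn: "in_Cn n m x" and xth: "x i \<in> theta n m R p a k x i"
    and opt: "\<forall>y\<in>theta n m R p a k x i. utility n m R p a k x i (x i) \<ge> utility n m R p a k x i y"
    using gne i unfolding is_GNE_def by blast+
  have xA: "\<forall>l\<in>{1..m}. if l \<in> Aset n m R p a k x i
                   then 0 \<le> x i l \<and> x i l \<le> omega R p a k i l - others n x i l
                   else x i l = 0" using xth unfolding theta_def mem_Collect_eq by (rule conjunct2)
  have s0: "0 \<le> ?s" unfolding others_def
    using Cn j by (intro sum_nonneg) (auto simp: in_Cn_def in_Cm_def)
  have wp: "0 < ?w \<and> ?w < 1 \<and> ?F ?w = 0" using omega_props[OF g i j] .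
  have tI: "typeI n m R p a k x i" using assms(4) unfolding T_I_def by auto
  have Jsub: "Jset n m R p a k x i \<subseteq> {1..m}" unfolding Jset_def Aset_def by auto
  have xz: "x i l = 0" if "l \<in> {1..m} - Jset n m R p a k x i" for l
  proof (cases "l \<in> Aset n m R p a k x i")
    case True then show ?thesis using that unfolding Jset_def by auto
  next
    case False
    have l: "l \<in> {1..m}" using that by blast
    have "if l \<in> Aset n m R p a k x i
                   then 0 \<le> x i l \<and> x i l \<le> omega R p a k i l - others n x i l
                   else x i l = 0" using xA l by (rule bspec)
    with False show ?thesis by simp
  qed
  have sumeq: "(\<Sum>l=1..m. x i l) = (\<Sum>l\<in>Jset n m R p a k x i. x i l)"
    by (rule sum.mono_neutral_right) (use Jsub xz in auto)
  define \<sigma> where "\<sigma> = 1 - (\<Sum>l=1..m. x i l)"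
  have sp: "\<sigma> > 0" using tI sumeq unfolding typeI_def \<sigma>_def by auto
  define e where "e = min ((?w - ?s) / 2) \<sigma>"
  have ep: "e > 0" using sp sw unfolding e_def by auto
  have ew1: "e \<le> (?w - ?s) / 2" "e \<le> \<sigma>" unfolding e_def by (rule min.cobounded1, rule min.cobounded2)
  have ewa: "e + ?s < ?w" and ewb: "e \<le> ?w - ?s" using half_aux[OF ew1(1) sw] by auto
  note ew = ewa ewb ew1(2)
  define y where "y = (x i)(j := e)"
  have xCm: "in_Cm m (x i)" using xth unfolding theta_def mem_Collect_eq by (rule conjunct1)
  have sumy: "(\<Sum>l=1..m. y l) = (\<Sum>l=1..m. x i l) + e"
  proof -
    have "(\<Sum>l=1..m. y l) = (\<Sum>l=1..m. x i l + (if l = j then e else 0))"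
      unfolding y_def using x0 by (intro sum.cong) auto
    also have "\<dots> = (\<Sum>l=1..m. x i l) + e" using j by (simp add: sum.distrib)
    finally show ?thesis .
  qed
  have yCm: "in_Cm m y" unfolding in_Cm_def
  proof
    show "\<forall>l\<in>{1..m}. 0 \<le> y l \<and> y l \<le> 1"
    proof
      fix l assume l: "l \<in> {1..m}"
      show "0 \<le> y l \<and> y l \<le> 1"
      proof (cases "l = j")
        case True
        then have "y l = e" by (simp add: y_def)
        then show ?thesis using ep ewb wp s0 by linarith
      next
        case False
        then have "y l = x i l" by (simp add: y_def)
        moreover have "0 \<le> x i l \<and> x i l \<le> 1" using xCm l unfolding in_Cm_def by blast
        ultimately show ?thesis by simp
      qed
    qed
    show "(\<Sum>l=1..m. y l) \<le> 1" using sumy ew1(2) unfolding \<sigma>_def by linarith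
  qed
  have yA: "\<forall>l\<in>{1..m}. if l \<in> Aset n m R p a k x i
                   then 0 \<le> y l \<and> y l \<le> omega R p a k i l - others n x i l
                   else y l = 0"
  proof
    fix l assume l: "l \<in> {1..m}"
    show "if l \<in> Aset n m R p a k x i
                   then 0 \<le> y l \<and> y l \<le> omega R p a k i l - others n x i l
                   else y l = 0"
    proof (cases "l = j")
      case True
      then have "y l = e" by (simp add: y_def)
      then show ?thesis using True jA ep ewb by (simp only: if_True) (use ep in auto)
    next
      case False
      have "if l \<in> Aset n m R p a k x i
                   then 0 \<le> x i l \<and> x i l \<le> omega R p a k i l - others n x i l
                   else x i l = 0" using xA l by (rule bspec)
      moreover have "y l = x i l" using False by (simp add: y_def)
      ultimately show ?thesis by simp
    qed
  qed
  have yth: "y \<in> theta n m R p a k x i" unfolding theta_def by (rule CollectI, rule conjI[OF yCm yA])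
  have Fpos: "?F (e + ?s) > 0"
    using FF_strict_decr[OF g i j, of "e + ?s" ?w] wp ew s0 ep by auto
  have ut: "utility n m R p a k x i y = utility n m R p a k x i (x i) + e powr a i * ?F (e + ?s)"
  proof -
    have "utility n m R p a k x i y = (\<Sum>l=1..m. x i l powr a i * FF R p a k i l (x i l + others n x i l)
       + (if l = j then e powr a i * ?F (e + ?s) else 0))"
      unfolding utility_def y_def using x0 by (intro sum.cong) auto
    also have "\<dots> = utility n m R p a k x i (x i) + e powr a i * ?F (e + ?s)"
      using j by (simp add: sum.distrib utility_def)
    finally show ?thesis .
  qed
  have "e powr a i * ?F (e + ?s) > 0" using ep Fpos by simp
  moreover have "utility n m R p a k x i y \<le> utility n m R p a k x i (x i)" using opt yth by blast
  ultimately show False using ut by linarith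
qed

end
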